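(* Let $p>5$ be a prime. Then $$\sum_{k=1}^{(p-1)/2}\frac{\binom{2k}{k}}{k(-16)^k}\equiv-\frac{15}{2}\cdot\frac{F_{p-\left(\frac{p}{5}\right)}}{p}+4q_p(2)\pmod p.$$
   Context: $(F_n)_{n\ge0}$ is the Fibonacci sequence ($F_0=0$, $F_1=1$, $F_{n+1}=F_n+F_{n-1}$); $\left(\frac{p}{5}\right)$ is the Legendre symbol (so $p\mid F_{p-(p/5)}$); $q_p(2)=(2^{p-1}-1)/p$. Congruences between rationals with denominators prime to $p$ mean the difference divided by $p$ has denominator prime to $p$. *)

theory Defs
  imports "HOL-Number_Theory.Number_Theory"
begin

definition rat_cong_mod :: "rat \<Rightarrow> rat \<Rightarrow> int \<Rightarrow> bool" where
  "rat_cong_mod x y m \<longleftrightarrow> coprime (snd (quotient_of ((x - y) / of_int m))) m"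

definition fermat_quot2 :: "nat \<Rightarrow> rat" where
  "fermat_quot2 p = (2 ^ (p - 1) - 1) / of_nat p"

end

theory Submission
  imports Defs
begin


lemma even_part:
  fixes a b :: "'a::comm_ring_1"
  shows "2 * (\<Sum>j\<le>n. of_nat (Suc (2*n) choose (2*j)) * b^(2*j) * a^(Suc (2*n) - 2*j))
       = (b+a)^(Suc (2*n)) + (-b+a)^(Suc (2*n))"
proof -
  let ?m = "Suc (2*n)"
  have "(b+a)^?m + (-b+a)^?m = (\<Sum>k\<le>?m. of_nat (?m choose k) * b^k * a^(?m-k) + of_nat (?m choose k) * (-b)^k * a^(?m-k))"
    unfolding binomial_ring[of b a] binomial_ring[of "-b" a] by (simp only: sum.distrib)
  also have "\<dots> = (\<Sum>k\<le>?m. if even k then 2 * (of_nat (?m choose k) * b^k * a^(?m-k)) else 0)"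
    by (rule sum.cong) (auto simp: algebra_simps)
  also have "\<dots> = (\<Sum>k\<in>{k. k\<le>?m \<and> even k}. 2 * (of_nat (?m choose k) * b^k * a^(?m-k)))"
    by (subst sum.inter_filter[symmetric]) (auto intro!: sum.cong)
  also have "{k. k\<le>?m \<and> even k} = (\<lambda>j. 2*j) ` {..n}"
    by (auto elim!: evenE)
  also have "(\<Sum>k\<in>(\<lambda>j. 2*j) ` {..n}. 2 * (of_nat (?m choose k) * b^k * a^(?m-k)))
     = (\<Sum>j\<le>n. 2 * (of_nat (?m choose (2*j)) * b^(2*j) * a^(?m-2*j)))"
    by (subst sum.reindex) (auto simp: inj_on_def)
  finally show ?thesis by (simp add: sum_distrib_left)
qed

lemma odd_part:
  fixes a b :: "'a::comm_ring_1"
  shows "2 * (\<Sum>j\<le>n. of_nat (Suc (2*n) choose (Suc (2*j))) * b^(Suc (2*j)) * a^(2*n - 2*j))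
       = (b+a)^(Suc (2*n)) - (-b+a)^(Suc (2*n))"
proof -
  let ?m = "Suc (2*n)"
  have "(b+a)^?m - (-b+a)^?m = (\<Sum>k\<le>?m. of_nat (?m choose k) * b^k * a^(?m-k) - of_nat (?m choose k) * (-b)^k * a^(?m-k))"
    unfolding binomial_ring[of b a] binomial_ring[of "-b" a] by (simp only: sum_subtractf)
  also have "\<dots> = (\<Sum>k\<le>?m. if odd k then 2 * (of_nat (?m choose k) * b^k * a^(?m-k)) else 0)"
    by (rule sum.cong) (auto simp: algebra_simps)
  also have "\<dots> = (\<Sum>k\<in>{k. k\<le>?m \<and> odd k}. 2 * (of_nat (?m choose k) * b^k * a^(?m-k)))"
    by (subst sum.inter_filter[symmetric]) (auto intro!: sum.cong)
  also have "{k. k\<le>?m \<and> odd k} = (\<lambda>j. Suc (2*j)) ` {..n}"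
    by (auto elim!: oddE)
  also have "(\<Sum>k\<in>(\<lambda>j. Suc (2*j)) ` {..n}. 2 * (of_nat (?m choose k) * b^k * a^(?m-k)))
     = (\<Sum>j\<le>n. 2 * (of_nat (?m choose Suc (2*j)) * b^Suc (2*j) * a^(2*n-2*j)))"
    by (subst sum.reindex) (auto simp: inj_on_def)
  finally show ?thesis by (simp add: sum_distrib_left)
qed



definition pint :: "nat \<Rightarrow> rat \<Rightarrow> bool" where
  "pint p x \<longleftrightarrow> (\<exists>a b. coprime b (int p) \<and> x = of_int a / of_int b)"

context fixes p :: nat assumes pp: "prime p"
begin

lemma cop_nz: "coprime (b::int) (int p) \<Longrightarrow> b \<noteq> 0"
  using pp by (cases "b = 0") (auto dest: prime_gt_1_nat)

lemma pint_int: "pint p (of_int a)"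
  unfolding pint_def by (rule exI[of _ a], rule exI[of _ 1]) auto

lemma pint_add: "pint p x \<Longrightarrow> pint p y \<Longrightarrow> pint p (x + y)"
  unfolding pint_def
proof (elim exE conjE)
  fix a b c d assume h: "coprime b (int p)" "x = of_int a / of_int b" "coprime d (int p)" "y = of_int c / of_int d"
  have "b \<noteq> 0" "d \<noteq> 0" using h cop_nz by auto
  then have "x + y = of_int (a*d + c*b) / of_int (b*d)" using h by (simp add: field_simps)
  moreover have "coprime (b*d) (int p)" using h by simp
  ultimately show "\<exists>a b. coprime b (int p) \<and> x + y = of_int a / of_int b" by blast
qed

lemma pint_mult: "pint p x \<Longrightarrow> pint p y \<Longrightarrow> pint p (x * y)"
  unfolding pint_def
proof (elim exE conjE)
  fix a b c d assume h: "coprime b (int p)" "x = of_int a / of_int b" "coprime d (int p)" "y = of_int c / of_int d"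
  have "x * y = of_int (a*c) / of_int (b*d)" using h by (simp add: field_simps)
  moreover have "coprime (b*d) (int p)" using h by simp
  ultimately show "\<exists>a b. coprime b (int p) \<and> x * y = of_int a / of_int b" by blast
qed

lemma pint_inv: "coprime k (int p) \<Longrightarrow> pint p (1 / of_int k)"
  unfolding pint_def by (rule exI[of _ 1], rule exI[of _ k]) auto

lemma pint_uminus: "pint p x \<Longrightarrow> pint p (- x)"
  using pint_mult[OF pint_int[of "-1"]] by simp

lemma pint_diff: "pint p x \<Longrightarrow> pint p y \<Longrightarrow> pint p (x - y)"
  using pint_add[OF _ pint_uminus] by simp

lemma pint_div: "pint p x \<Longrightarrow> coprime k (int p) \<Longrightarrow> pint p (x / of_int k)"
  using pint_mult[OF _ pint_inv] by (simp add: divide_inverse)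

lemma pint_sum: "(\<And>i. i \<in> A \<Longrightarrow> pint p (f i)) \<Longrightarrow> pint p (\<Sum>i\<in>A. f i)"
proof (induction A rule: infinite_finite_induct)
  case (infinite A) then show ?case using pint_int[of 0] by simp
next
  case empty then show ?case using pint_int[of 0] by simp
next
  case (insert x F) then show ?case by (simp add: pint_add)
qed

lemma rat_cong_mod_iff: "rat_cong_mod x y (int p) \<longleftrightarrow> pint p ((x - y) / of_nat p)"
proof
  assume "rat_cong_mod x y (int p)"
  then show "pint p ((x - y) / of_nat p)" unfolding rat_cong_mod_def pint_def
    by (metis of_int_of_nat_eq prod.collapse quotient_of_div)
next
  assume "pint p ((x - y) / of_nat p)"
  then obtain a b where ab: "coprime b (int p)" "(x - y) / of_nat p = of_int a / of_int b"
    unfolding pint_def by blast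
  obtain n d where nd: "quotient_of ((x - y) / of_nat p) = (n, d)" by (cases "quotient_of ((x - y) / of_nat p)")
  have d: "d > 0" "coprime n d" using nd quotient_of_denom_pos quotient_of_coprime by auto
  have "of_int n / of_int d = (of_int a / of_int b :: rat)" using nd ab quotient_of_div by metis
  moreover have "b \<noteq> 0" using ab cop_nz by auto
  ultimately have "n * b = a * d" using d by (simp add: field_simps) (metis of_int_eq_iff of_int_mult)
  then have "d dvd n * b" by simp
  then have "d dvd b" using d(2) by (simp add: coprime_dvd_mult_right_iff coprime_commute)
  then have "coprime d (int p)" using ab(1) coprime_imp_coprime by (metis coprime_commute dvd_trans dvd_refl coprime_divisors)
  then show "rat_cong_mod x y (int p)" unfolding rat_cong_mod_def using nd by simp
qed

definition cg :: "rat \<Rightarrow> rat \<Rightarrow> bool" where "cg x y \<longleftrightarrow> pint p ((x - y) / of_nat p)"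

lemma cg_refl: "x = y \<Longrightarrow> cg x y" unfolding cg_def using pint_int[of 0] by simp

lemma cg_trans: "cg x y \<Longrightarrow> cg y z \<Longrightarrow> cg x z"
  unfolding cg_def using pint_add[of "(x-y)/of_nat p" "(y-z)/of_nat p"] by (simp add: diff_divide_distrib)

lemma cg_sum: "(\<And>i. i \<in> A \<Longrightarrow> cg (f i) (g i)) \<Longrightarrow> cg (\<Sum>i\<in>A. f i) (\<Sum>i\<in>A. g i)"
  unfolding cg_def using pint_sum[of A "\<lambda>i. (f i - g i) / of_nat p"]
  by (simp add: sum_subtractf[symmetric] sum_divide_distrib[symmetric])

end


lemma central_rec: "Suc k * (2 * Suc k choose Suc k) = 2 * (2*k+1) * (2*k choose k)"
proof -
  have "Suc k * (2 * Suc k choose Suc k) = Suc (Suc (2*k)) * (Suc (2*k) choose k)"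
    using Suc_times_binomial[of k "Suc (2*k)"] by simp
  also have "Suc (2*k) choose k = Suc (2*k) choose Suc k"
    using binomial_symmetric[of k "Suc (2*k)"] by simp
  also have "Suc (Suc (2*k)) * (Suc (2*k) choose Suc k) = 2 * (Suc k * (Suc (2*k) choose Suc k))" by simp
  also have "Suc k * (Suc (2*k) choose Suc k) = Suc (2*k) * (2*k choose k)"
    using Suc_times_binomial_eq[of "2*k" k] by simp
  finally show ?thesis by simp
qed

lemma step1_int:
  assumes pp: "prime p" and pn: "p = Suc (2*n)" and kn: "k \<le> n"
  shows "int p dvd int (2*k choose k) - (-4)^k * int (n choose k)"
  using kn
proof (induction k)
  case 0 then show ?case by simp
next
  case (Suc k)
  let ?D = "\<lambda>k. int (2*k choose k) - (-4)^k * int (n choose k)"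
  have IH: "int p dvd ?D k" using Suc by simp
  have e1': "int (Suc k) * int (2 * Suc k choose Suc k) = int (2 * (2*k+1)) * int (2*k choose k)"
    by (metis central_rec of_nat_mult)
  have e1: "int (Suc k) * int (2 * Suc k choose Suc k) = 2 * (2*int k+1) * int (2*k choose k)"
    using e1' by simp
  have e2: "int (Suc k) * int (n choose Suc k) = (int n - int k) * int (n choose k)"
  proof -
    have "Suc k * (n choose Suc k) = (n - k) * (n choose k)"
      using binomial_absorption[of k n] binomial_absorb_comp[of n k] by simp
    then have "int (Suc k * (n choose Suc k)) = int ((n - k) * (n choose k))" by simp
    then show ?thesis using Suc.prems by (simp only: of_nat_mult of_nat_diff)
  qed
  have key: "\<And>s X Y Z W A B c::int. s*X = A*Y \<Longrightarrow> s*Z = B*W \<Longrightarrow>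
      s*(X - (-4)*c*Z) = A*(Y - c*W) + (4*B + A)*c*W"
    by (simp add: algebra_simps)
  have "int (Suc k) * ?D (Suc k) = (2 * (2*int k+1)) * ?D k + (4*(int n - int k) + 2 * (2*int k+1)) * (-4)^k * int (n choose k)"
    using key[OF e1 e2, of "(-4)^k"] by (simp only: power_Suc mult.assoc)
  also have "4*(int n - int k) + 2 * (2*int k+1) = 2 * int p" using pn by simp
  finally have "int (Suc k) * ?D (Suc k) = (2 * (2*int k+1)) * ?D k + 2 * int p * ((-4)^k * int (n choose k))"
    by (simp only: mult.assoc)
  then have "int p dvd int (Suc k) * ?D (Suc k)" using IH by simp
  moreover have "coprime (int p) (int (Suc k))"
  proof -
    have "\<not> p dvd Suc k" using Suc.prems pn by (auto dest: dvd_imp_le)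
    then have "coprime p (Suc k)" using pp by (simp add: prime_imp_coprime)
    then show ?thesis by (simp only: coprime_int_iff)
  qed
  ultimately show ?case using coprime_dvd_mult_right_iff by blast
qed

lemma binom_pm1:
  assumes pp: "prime p" and k: "k \<le> p - 1"
  shows "int p dvd int (p - 1 choose k) - (-1)^k"
  using k
proof (induction k)
  case 0 then show ?case by simp
next
  case (Suc k)
  have "int p dvd int (p choose Suc k)"
    using dvd_choose_prime[of "Suc k" p] Suc.prems pp by (simp add: prime_gt_0_nat)
  moreover have "p choose Suc k = (p - 1 choose k) + (p - 1 choose Suc k)"
    using binomial_Suc_Suc[of "p-1" k] pp by (simp add: prime_gt_0_nat)
  ultimately have h1: "int p dvd int (p - 1 choose k) + int (p - 1 choose Suc k)" by simp
  have h2: "int p dvd int (p - 1 choose k) - (-1)^k" using Suc.IH Suc.prems by simp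
  have "int p dvd (int (p - 1 choose k) + int (p - 1 choose Suc k)) - (int (p - 1 choose k) - (-1)^k)"
    using dvd_diff[OF h1 h2] .
  moreover have "(int (p - 1 choose k) + int (p - 1 choose Suc k)) - (int (p - 1 choose k) - (-1)^k)
     = int (p - 1 choose Suc k) - (-1)^Suc k" by simp
  ultimately show ?case by (metis (no_types))
qed



lemma binom_sum_m1: "(\<Sum>k=1..m. of_nat (m choose k) * x^k) = (1+x)^m - (1::'a::comm_ring_1)"
proof -
  have "(x+1)^m = (\<Sum>k\<le>m. of_nat (m choose k) * x^k)" using binomial_ring[of x 1 m] by simp
  also have "{..m} = insert 0 {1..m}" by auto
  also have "(\<Sum>k\<in>insert 0 {1..m}. of_nat (m choose k) * x^k) = 1 + (\<Sum>k=1..m. of_nat (m choose k) * x^k)"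
    by (subst sum.insert) auto
  finally show ?thesis by (simp add: algebra_simps)
qed

lemma term_id:
  assumes "k \<ge> 1"
  shows "of_nat (Suc n choose k) / of_nat k = of_nat (n choose k) / of_nat k + of_nat (Suc n choose k) / (of_nat (Suc n) :: 'a::field_char_0)"
proof -
  obtain k' where k: "k = Suc k'" using assms by (cases k) auto
  have e1: "of_nat (Suc n choose Suc k') = (of_nat (n choose k') + of_nat (n choose Suc k') :: 'a)" by simp
  have e2: "of_nat (Suc k') * of_nat (Suc n choose Suc k') = (of_nat (Suc n) * of_nat (n choose k') :: 'a)"
    by (metis Suc_times_binomial of_nat_mult)
  have abs: "\<And>a b c kk nn::'a. c = a + b \<Longrightarrow> kk*c = nn*a \<Longrightarrow> kk \<noteq> 0 \<Longrightarrow> nn \<noteq> 0 \<Longrightarrow> c/kk = b/kk + c/nn"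
  proof -
    fix a b c kk nn :: 'a assume h: "c = a + b" "kk*c = nn*a" "kk \<noteq> 0" "nn \<noteq> 0"
    have "a/kk = c/nn" using h by (simp add: frac_eq_eq mult.commute)
    then show "c/kk = b/kk + c/nn" using h(1) by (simp add: add_divide_distrib)
  qed
  show ?thesis unfolding k by (rule abs[OF e1 e2]) (simp_all del: of_nat_Suc)
qed

lemma harm_id: "(\<Sum>k=1..n. of_nat (n choose k) * x^k / of_nat k) = (\<Sum>j=1..n. ((1+x)^j - 1) / (of_nat j :: 'a::field_char_0))"
proof (induction n)
  case 0 then show ?case by simp
next
  case (Suc n)
  have "(\<Sum>k=1..Suc n. of_nat (Suc n choose k) * x^k / of_nat k)
      = (\<Sum>k=1..Suc n. of_nat (n choose k) * x^k / of_nat k + of_nat (Suc n choose k) * x^k / of_nat (Suc n))"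
  proof (rule sum.cong[OF refl])
    fix k assume "k \<in> {1..Suc n}"
    then have t: "of_nat (Suc n choose k) / of_nat k = of_nat (n choose k) / of_nat k + of_nat (Suc n choose k) / (of_nat (Suc n) :: 'a)"
      by (intro term_id) auto
    have "of_nat (Suc n choose k) * x^k / of_nat k = (of_nat (Suc n choose k) / of_nat k) * x^k" by simp
    also have "\<dots> = (of_nat (n choose k) / of_nat k + of_nat (Suc n choose k) / (of_nat (Suc n) :: 'a)) * x^k"
      by (simp only: t)
    finally show "of_nat (Suc n choose k) * x^k / of_nat k = of_nat (n choose k) * x^k / of_nat k + of_nat (Suc n choose k) * x^k / of_nat (Suc n)"
      by (simp only: distrib_right times_divide_eq_left)
  qed
  also have "\<dots> = (\<Sum>k=1..Suc n. of_nat (n choose k) * x^k / of_nat k) + (\<Sum>k=1..Suc n. of_nat (Suc n choose k) * x^k) / of_nat (Suc n)"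
    by (simp only: sum.distrib sum_divide_distrib)
  also have "(\<Sum>k=1..Suc n. of_nat (n choose k) * x^k / of_nat k) = (\<Sum>k=1..n. of_nat (n choose k) * x^k / of_nat k)"
    by simp
  also have "(\<Sum>k=1..Suc n. of_nat (Suc n choose k) * x^k) = (1+x)^Suc n - 1"
    by (rule binom_sum_m1)
  finally show ?case using Suc by simp
qed



lemma binet_facts:
  fixes n :: nat
  defines "p \<equiv> Suc (2*n)"
  defines "a \<equiv> int (fib (2*n)) + int (fib (Suc p))"
  defines "b \<equiv> int (fib p)"
  shows "2 * (\<Sum>j\<le>n. int (p choose (2*j)) * 5^j * 2^(p - 2*j)) = a^3 + 3*a"
    and "a^2 - 5*b^2 = -4"
    and "(\<Sum>j\<le>n. int (p choose (2*j)) * 5^j) = 2^(p-1) * a"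
    and "(\<Sum>j\<le>n. int (p choose (Suc (2*j))) * 5^j) = 2^(p-1) * b"
proof -
  define \<phi> :: real where "\<phi> = (1 + sqrt 5) / 2"
  define \<psi> :: real where "\<psi> = (1 - sqrt 5) / 2"
  have s5: "sqrt 5 * sqrt 5 = (5::real)" by simp
  have s5p: "sqrt (5::real) \<noteq> 0" by simp
  have fib: "\<And>m. real (fib m) = (\<phi>^m - \<psi>^m) / sqrt 5"
    unfolding \<phi>_def \<psi>_def by (rule fib_closed_form)
  have pp: "\<phi> * \<psi> = -1" unfolding \<phi>_def \<psi>_def by (simp add: field_simps s5)
  have ph2: "\<phi>^2 + 1 = sqrt 5 * \<phi>" unfolding \<phi>_def by (simp add: field_simps power2_eq_square s5)
  have ps2: "\<psi>^2 + 1 = - sqrt 5 * \<psi>" unfolding \<psi>_def by (simp add: field_simps power2_eq_square s5)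
  have ph3: "\<phi>^3 = sqrt 5 + 2" unfolding \<phi>_def by (simp add: field_simps power3_eq_cube s5)
  have ps3: "\<psi>^3 = - sqrt 5 + 2" unfolding \<psi>_def by (simp add: field_simps power3_eq_cube s5)
  have ra: "real_of_int a = \<phi>^p + \<psi>^p"
  proof -
    have "real_of_int a = (\<phi>^(2*n) - \<psi>^(2*n)) / sqrt 5 + (\<phi>^(Suc p) - \<psi>^(Suc p)) / sqrt 5"
      unfolding a_def using fib by simp
    also have "\<phi>^(Suc p) = \<phi>^(2*n) * \<phi>^2" unfolding p_def by (simp add: power_add[symmetric])
    also have "\<psi>^(Suc p) = \<psi>^(2*n) * \<psi>^2" unfolding p_def by (simp add: power_add[symmetric])
    finally have "real_of_int a = (\<phi>^(2*n) * (\<phi>^2+1) - \<psi>^(2*n) * (\<psi>^2 + 1)) / sqrt 5"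
      by (simp only: add_divide_distrib[symmetric]) (simp add: algebra_simps)
    also have "\<dots> = \<phi>^p + \<psi>^p" unfolding ph2 ps2 p_def using s5p by (simp add: field_simps)
    finally show ?thesis .
  qed
  have rb: "real_of_int b * sqrt 5 = \<phi>^p - \<psi>^p" unfolding b_def using fib s5p by simp
  have xy: "\<phi>^p * \<psi>^p = -1" unfolding power_mult_distrib[symmetric] pp p_def by simp
  have sq: "\<And>j. sqrt (5::real) ^ (2*j) = 5^j" by (simp add: power_mult)
  show "2 * (\<Sum>j\<le>n. int (p choose (2*j)) * 5^j * 2^(p - 2*j)) = a^3 + 3*a"
  proof -
    have "real_of_int (2 * (\<Sum>j\<le>n. int (p choose (2*j)) * 5^j * 2^(p - 2*j)))
        = 2 * (\<Sum>j\<le>n. of_nat (p choose (2*j)) * sqrt 5^(2*j) * 2^(p - 2*j))"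
      by (simp add: sq)
    also have "\<dots> = (sqrt 5 + 2)^p + (- sqrt 5 + 2)^p" unfolding p_def by (rule even_part)
    also have "\<dots> = (\<phi>^p)^3 + (\<psi>^p)^3" unfolding ph3[symmetric] ps3[symmetric] by (simp add: power_mult[symmetric] mult.commute)
    also have "\<dots> = (\<phi>^p + \<psi>^p)^3 - 3 * (\<phi>^p * \<psi>^p) * (\<phi>^p + \<psi>^p)" by (simp add: algebra_simps power3_eq_cube)
    also have "\<dots> = real_of_int (a^3 + 3*a)" unfolding xy ra[symmetric] by simp
    finally show ?thesis by (simp only: of_int_eq_iff)
  qed
  show "a^2 - 5*b^2 = -4"
  proof -
    have "real_of_int (a^2 - 5*b^2) = (\<phi>^p + \<psi>^p)^2 - (real_of_int b * sqrt 5)^2"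
      unfolding ra[symmetric] by (simp add: power_mult_distrib)
    also have "\<dots> = (\<phi>^p + \<psi>^p)^2 - (\<phi>^p - \<psi>^p)^2" unfolding rb ..
    also have "\<dots> = 4 * (\<phi>^p * \<psi>^p)" by (simp add: algebra_simps power2_eq_square)
    finally have "real_of_int (a^2 - 5*b^2) = real_of_int (-4)" unfolding xy by simp
    then show ?thesis by (simp only: of_int_eq_iff)
  qed
  have t1: "sqrt 5 + 1 = 2*\<phi>" "- sqrt 5 + 1 = 2*\<psi>" unfolding \<phi>_def \<psi>_def by simp_all
  have tp: "(2::real)^p = 2 * 2^(p-1)" unfolding p_def by simp
  show "(\<Sum>j\<le>n. int (p choose (2*j)) * 5^j) = 2^(p-1) * a"
  proof -
    have "2 * real_of_int (\<Sum>j\<le>n. int (p choose (2*j)) * 5^j)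
        = 2 * (\<Sum>j\<le>n. of_nat (p choose (2*j)) * sqrt 5^(2*j) * 1^(p - 2*j))"
      by (simp add: sq)
    also have "\<dots> = (sqrt 5 + 1)^p + (- sqrt 5 + 1)^p" unfolding p_def by (rule even_part)
    also have "\<dots> = (2*\<phi>)^p + (2*\<psi>)^p" unfolding t1 ..
    also have "\<dots> = 2 * real_of_int (2^(p-1) * a)" unfolding power_mult_distrib tp by (simp add: ra algebra_simps)
    finally show ?thesis by (simp only: of_int_eq_iff mult_left_cancel)
  qed
  show "(\<Sum>j\<le>n. int (p choose (Suc (2*j))) * 5^j) = 2^(p-1) * b"
  proof -
    have "2 * sqrt 5 * real_of_int (\<Sum>j\<le>n. int (p choose (Suc (2*j))) * 5^j)
        = 2 * (\<Sum>j\<le>n. of_nat (p choose Suc (2*j)) * sqrt 5^(Suc (2*j)) * 1^(2*n - 2*j))"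
    proof -
      have tm: "\<And>j. of_nat (p choose Suc (2*j)) * sqrt 5^(Suc (2*j)) * 1^(2*n - 2*j) = sqrt 5 * (of_nat (p choose Suc (2*j)) * 5^j)"
        using sq by (simp only: power_Suc power_one mult_1_right) simp
      show ?thesis by (simp only: tm sum_distrib_left[symmetric]) simp
    qed
    also have "\<dots> = (sqrt 5 + 1)^p - (- sqrt 5 + 1)^p" unfolding p_def by (rule odd_part)
    also have "\<dots> = (2*\<phi>)^p - (2*\<psi>)^p" unfolding t1 ..
    also have "\<dots> = 2 * 2^(p-1) * (\<phi>^p - \<psi>^p)" unfolding power_mult_distrib tp
      by (simp add: algebra_simps)
    also have "\<dots> = 2 * sqrt 5 * real_of_int (2^(p-1) * b)" unfolding rb[symmetric]
      by (simp add: algebra_simps)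
    finally have "real_of_int (\<Sum>j\<le>n. int (p choose (Suc (2*j))) * 5^j) = real_of_int (2^(p-1) * b)"
      using s5p by simp
    then show ?thesis by (simp only: of_int_eq_iff)
  qed
qed



lemma final_int:
  fixes a b e w V F :: int and p :: nat
  assumes pp: "prime p" and odd: "odd p"
    and hw: "[w = 1] (mod int p)" and ha: "[a = 1] (mod int p)" and hb: "[e*b = 1] (mod int p)"
    and he: "e^2 = 1" and hab: "a^2 - 5*b^2 = -4" and hV: "2*V = a^3 + 3*a" and hF: "2*F = a - e*b"
  shows "(int p)^2 dvd -2*V - 4*w^2 + 15*w*F + 8*w"
proof -
  let ?p = "int p"
  obtain t where t: "w = 1 + ?p * t" using hw by (metis cong_iff_dvd_diff cong_sym dvdE eq_diff_eq add.commute)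
  obtain u where u: "a = 1 + ?p * u" using ha by (metis cong_iff_dvd_diff cong_sym dvdE eq_diff_eq add.commute)
  obtain v where v: "e*b = 1 + ?p * v" using hb by (metis cong_iff_dvd_diff cong_sym dvdE eq_diff_eq add.commute)
  have "a^2 - 5*(e*b)^2 = -4" using hab he by (simp add: power_mult_distrib)
  then have "?p * (2*(u - 5*v) + ?p * (u^2 - 5*v^2)) = 0" unfolding u v
    by (simp add: algebra_simps power2_eq_square)
  moreover have "?p \<noteq> 0" using pp by (simp add: prime_gt_0_nat)
  ultimately have X0: "2*(u - 5*v) + ?p * (u^2 - 5*v^2) = 0" by (metis mult_eq_0_iff)
  have "2*(u - 5*v) = ?p * (-(u^2 - 5*v^2))" unfolding mult_minus_right eq_neg_iff_add_eq_0 by (rule X0)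
  then have "?p dvd 2*(u - 5*v)" by (metis dvd_triv_left)
  moreover have "coprime ?p 2" using odd by simp
  ultimately have "?p dvd u - 5*v" using coprime_dvd_mult_right_iff by (metis mult.commute)
  then obtain k where k: "u = 5*v + ?p*k" by (metis dvdE eq_diff_eq add.commute)
  have "2 * (-2*V - 4*w^2 + 15*w*F + 8*w) = -2*(2*V) - 8*w^2 + 15*w*(2*F) + 16*w"
    by (simp add: algebra_simps)
  also have "\<dots> = -2*(a^3 + 3*a) - 8*w^2 + 15*w*(a - e*b) + 16*w" unfolding hV hF ..
  also have "\<dots> = ?p^2 * (3*k - 6*u^2 - 8*t^2 + 15*t*(u-v) - 2*?p*u^3)"
    unfolding v t u unfolding k by (simp add: algebra_simps power2_eq_square power3_eq_cube)
  finally have "?p^2 dvd 2 * (-2*V - 4*w^2 + 15*w*F + 8*w)" by simp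
  moreover have "coprime (?p^2) 2" using odd by simp
  ultimately show ?thesis using coprime_dvd_mult_right_iff by blast
qed



lemma legendre_facts:
  assumes pp: "prime p" and p5: "p > 5"
  shows "Legendre (int p) 5 = 1 \<or> Legendre (int p) 5 = -1"
    and "[Legendre (int p) 5 = 5 ^ ((p - 1) div 2)] (mod int p)"
proof -
  have "Legendre (int p) (int 5) * Legendre (int 5) (int p) = (-1::int) ^ ((p - 1) div 2 * ((5 - 1) div 2))"
    by (rule Quadratic_Reciprocity) (use pp p5 in auto)
  then have qr: "Legendre (int p) 5 * Legendre 5 (int p) = 1" by (simp add: power_mult power_mult_distrib[symmetric] mult.commute[of _ 2])
  then show "Legendre (int p) 5 = 1 \<or> Legendre (int p) 5 = -1" by (auto simp: zmult_eq_1_iff)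
  from qr have eq: "Legendre (int p) 5 = Legendre 5 (int p)" by (auto simp: zmult_eq_1_iff)
  show "[Legendre (int p) 5 = 5 ^ ((p - 1) div 2)] (mod int p)"
    unfolding eq by (rule euler_criterion) (use pp p5 in auto)
qed

lemma sum_even_cong:
  assumes pp: "prime p" and pn: "p = Suc (2*n)"
  shows "[(\<Sum>j\<le>n. int (p choose (2*j)) * 5^j) = 1] (mod int p)"
proof -
  have "(\<Sum>j\<le>n. int (p choose (2*j)) * 5^j) = 1 + (\<Sum>j\<in>{1..n}. int (p choose (2*j)) * 5^j)"
  proof -
    have "{..n} = insert 0 {1..n}" by auto
    then show ?thesis by (simp add: sum.insert)
  qed
  moreover have "int p dvd (\<Sum>j\<in>{1..n}. int (p choose (2*j)) * 5^j)"
  proof (rule dvd_sum)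
    fix j assume j: "j \<in> {1..n}"
    have "p dvd (p choose (2*j))" using j pn pp by (intro dvd_choose_prime) auto
    then show "int p dvd int (p choose (2*j)) * 5^j" by simp
  qed
  ultimately show ?thesis by (simp add: cong_iff_dvd_diff)
qed

lemma sum_odd_cong:
  assumes pp: "prime p" and pn: "p = Suc (2*n)"
  shows "[(\<Sum>j\<le>n. int (p choose (Suc (2*j))) * 5^j) = 5^n] (mod int p)"
proof -
  have "(\<Sum>j\<le>n. int (p choose (Suc (2*j))) * 5^j) = 5^n + (\<Sum>j<n. int (p choose (Suc (2*j))) * 5^j)"
  proof -
    have "{..n} = insert n {..<n}" by auto
    then show ?thesis using pn by (simp add: sum.insert)
  qed
  moreover have "int p dvd (\<Sum>j<n. int (p choose (Suc (2*j))) * 5^j)"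
  proof (rule dvd_sum)
    fix j assume j: "j \<in> {..<n}"
    have "p dvd (p choose (Suc (2*j)))" using j pn pp by (intro dvd_choose_prime) auto
    then show "int p dvd int (p choose (Suc (2*j))) * 5^j" by simp
  qed
  ultimately show ?thesis by (simp add: cong_iff_dvd_diff)
qed



lemma coprime_k16:
  assumes pp: "prime p" and p5: "p > 5" and k: "1 \<le> k" "k < p" and c: "c = -16 \<or> c = 4 \<or> c = (2::int)"
  shows "coprime (int k * c^j) (int p)"
proof -
  have pi: "prime (int p)" using pp by simp
  have "\<not> p dvd k" using k by (auto dest: dvd_imp_le)
  then have "\<not> int p dvd int k" by simp
  moreover have "\<not> int p dvd c"
  proof
    assume "int p dvd c"
    moreover have "c dvd 2^4" using c by (elim disjE) (simp, simp add: dvd_def, simp)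
    ultimately have "int p dvd 2^4" by (rule dvd_trans)
    then have "int p dvd 2" by (rule prime_dvd_power[OF pi])
    then have "p dvd 2" by (metis of_nat_dvd_iff of_nat_numeral)
    then show False using p5 by (auto dest: dvd_imp_le)
  qed
  then have "\<not> int p dvd c^j" using pi prime_dvd_power by blast
  with \<open>\<not> int p dvd int k\<close> have "\<not> int p dvd int k * c^j" using pi prime_dvd_mult_iff by blast
  then have "coprime (int p) (int k * c^j)" using pi prime_imp_coprime by blast
  then show ?thesis by (simp add: coprime_commute)
qed

lemma stepA:
  assumes pp: "prime p" and p5: "p > 5" and pn: "p = Suc (2*n)"
  shows "cg p (\<Sum>k=1..n. of_nat ((2*k) choose k) / (of_nat k * (-16) ^ k))
              (\<Sum>k=1..n. of_nat (n choose k) * (1/4)^k / of_nat k)"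
proof (rule cg_sum[OF pp])
  fix k assume kk: "k \<in> {1..n}"
  then have k1: "1 \<le> k" "k < p" "k \<le> n" using pn by auto
  obtain m where m: "int (2*k choose k) - (-4)^k * int (n choose k) = int p * m"
    using step1_int[OF pp pn k1(3)] by (auto elim: dvdE)
  have cop: "coprime (int k * (-16)^k) (int p)" by (rule coprime_k16[OF pp p5 k1(1,2)]) simp
  have kz: "(of_nat k :: rat) \<noteq> 0" using k1 by simp
  have p0: "(of_nat p :: rat) \<noteq> 0" using pn by simp
  have pw: "(-16::rat)^k = (-4)^k * 4^k" by (simp add: power_mult_distrib[symmetric])
  have ey: "of_nat (n choose k) * (1/4::rat)^k / of_nat k = (-4)^k * of_nat (n choose k) / (of_nat k * (-16)^k)"
    unfolding pw by (simp add: field_simps power_one_over)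
  have mr: "(of_nat (2*k choose k) :: rat) - (-4)^k * of_nat (n choose k) = of_nat p * of_int m"
    using arg_cong[OF m, of "of_int :: int \<Rightarrow> rat"] by simp
  have "(of_nat ((2*k) choose k) / (of_nat k * (-16) ^ k) - of_nat (n choose k) * (1/4)^k / of_nat k) / of_nat p
        = ((of_nat (2*k choose k) :: rat) - (-4)^k * of_nat (n choose k)) / (of_nat k * (-16)^k) / of_nat p"
    unfolding ey by (simp add: diff_divide_distrib)
  also have "\<dots> = of_int m / of_int (int k * (-16)^k)" unfolding mr using p0 by simp
  finally show "cg p (of_nat ((2*k) choose k) / (of_nat k * (-16) ^ k)) (of_nat (n choose k) * (1/4)^k / of_nat k)"
    unfolding cg_def[OF pp] using pint_div[OF pp pint_int[OF pp] cop] by simp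
qed

lemma abs_C:
  fixes c J P C C' m :: rat assumes "2*J*C = P*C'" "C' + 1 = P*m" "J \<noteq> 0" "P \<noteq> 0"
  shows "(c / J - (- (2 / P) * C * c)) / P = c * m / J"
proof -
  have "(c / J - (- (2 / P) * C * c)) / P = c * (P + 2*J*C) / (J * P * P)"
    using assms by (simp add: field_simps)
  also have "\<dots> = c * (P * (C' + 1)) / (J * P * P)" unfolding assms(1) by (simp add: algebra_simps)
  also have "\<dots> = c * m / J" unfolding assms(2) using assms(3,4) by (simp add: field_simps)
  finally show ?thesis .
qed

lemma stepC:
  assumes pp: "prime p" and p5: "p > 5" and pn: "p = Suc (2*n)"
  shows "cg p (\<Sum>j=1..n. ((5/4)^j - 1) / (of_nat j :: rat))
              (\<Sum>j=1..n. - (2 / of_nat p) * of_nat (p choose (2*j)) * ((5/4)^j - 1))"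
proof (rule cg_sum[OF pp])
  fix j assume jj: "j \<in> {1..n}"
  then have j1: "1 \<le> j" "j < p" "2*j - 1 \<le> p - 1" using pn by auto
  define c :: rat where "c = (5/4)^j - 1"
  have cpint: "pint p c"
  proof -
    have ce: "c = of_int (5^j - 4^j) / of_int (int 1 * 4^j)" unfolding c_def by (simp add: power_divide diff_divide_distrib)
    have "coprime (int 1 * 4^j) (int p)" by (rule coprime_k16[OF pp p5]) (use p5 in auto)
    then show ?thesis unfolding ce by (rule pint_div[OF pp pint_int[OF pp]])
  qed
  have copj: "coprime (int j * 2^0) (int p)" by (rule coprime_k16[OF pp p5 j1(1,2)]) simp
  obtain m where m: "int (p - 1 choose (2*j - 1)) - (-1)^(2*j-1) = int p * m"
    using binom_pm1[OF pp j1(3)] by (auto elim: dvdE)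
  have odd1: "(-1::int)^(2*j-1) = -1" using j1 by (simp add: power_minus1_odd)
  have mr: "(of_nat (p - 1 choose (2*j - 1)) :: rat) + 1 = of_nat p * of_int m"
    using arg_cong[OF m, of "of_int :: int \<Rightarrow> rat"] unfolding odd1 by simp
  have abn: "(2*j) * (p choose (2*j)) = p * (p - 1 choose (2*j - 1))"
    using times_binomial_minus1_eq[of "2*j" p] j1 by simp
  have ab: "2 * (of_nat j :: rat) * of_nat (p choose (2*j)) = of_nat p * of_nat (p - 1 choose (2*j - 1))"
    using arg_cong[OF abn, of "of_nat :: nat \<Rightarrow> rat"] by simp
  have jz: "(of_nat j :: rat) \<noteq> 0" using j1 by simp
  have p0: "(of_nat p :: rat) \<noteq> 0" using pn by simp
  have eq: "(c / of_nat j - (- (2 / of_nat p) * of_nat (p choose (2*j)) * c)) / of_nat p = c * of_int m / of_int (int j * 2^0)"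
    using abs_C[OF ab mr jz p0, of c] by simp
  show "cg p (((5/4)^j - 1) / (of_nat j :: rat)) (- (2 / of_nat p) * of_nat (p choose (2*j)) * ((5/4)^j - 1))"
    unfolding cg_def[OF pp] c_def[symmetric] eq by (rule pint_div[OF pp pint_mult[OF pp cpint pint_int[OF pp]] copj])
qed

lemma abs_E:
  fixes V W F P m :: rat assumes h: "-2*V - 4*W^2 + 15*W*F + 8*W = P^2*m" and "W \<noteq> 0" "P \<noteq> 0"
  shows "((-(2/P)*(V/(2*W) - W)) - (-(15/2)*F/P + 4*((W-1)/P)))/P = m/(2*W)"
proof -
  have "((-(2/P)*(V/(2*W) - W)) - (-(15/2)*F/P + 4*((W-1)/P)))/P = (-2*V - 4*W^2 + 15*W*F + 8*W) / (2*W*P^2)"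
    using assms(2,3) by (simp add: field_simps power2_eq_square)
  also have "\<dots> = m/(2*W)" unfolding h using assms(2,3) by (simp add: field_simps power2_eq_square)
  finally show ?thesis .
qed

lemma stepD:
  assumes pn: "p = Suc (2*n)"
  shows "(\<Sum>j=1..n. - (2 / of_nat p) * of_nat (p choose (2*j)) * ((5/4)^j - 1))
       = - (2 / of_nat p) * (of_int (\<Sum>j\<le>n. int (p choose (2*j)) * 5^j * 2^(p - 2*j)) / (2 * 2^(p-1)) - 2^(p-1) :: rat)"
proof -
  have "(\<Sum>j=1..n. - (2 / of_nat p) * of_nat (p choose (2*j)) * ((5/4)^j - 1))
      = (\<Sum>j\<le>n. - (2 / of_nat p) * of_nat (p choose (2*j)) * ((5/4)^j - (1::rat)))"
  proof -
    have "{..n} = insert 0 {1..n}" by auto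
    then show ?thesis by (simp add: sum.insert)
  qed
  also have "\<dots> = (\<Sum>j\<le>n. - (2 / of_nat p) * (of_nat (p choose (2*j)) * (5/4)^j - of_nat (p choose (2*j))))"
    by (rule sum.cong[OF refl]) (simp only: mult.assoc right_diff_distrib mult_1_right)
  also have "\<dots> = - (2 / of_nat p) * (\<Sum>j\<le>n. of_nat (p choose (2*j)) * (5/4)^j - of_nat (p choose (2*j)))"
    by (simp only: sum_distrib_left)
  also have "\<dots> = - (2 / of_nat p) * ((\<Sum>j\<le>n. of_nat (p choose (2*j)) * (5/4)^j) - (\<Sum>j\<le>n. of_nat (p choose (2*j))))"
    by (simp only: sum_subtractf)
  also have "(\<Sum>j\<le>n. of_nat (p choose (2*j)) :: rat) = 2^(p-1)"
  proof -
    have "2 * (\<Sum>j\<le>n. of_nat (Suc (2*n) choose (2*j)) * (1::rat)^(2*j) * 1^(Suc (2*n) - 2*j))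
       = (1+1)^(Suc (2*n)) + (-1+1)^(Suc (2*n))" by (rule even_part)
    then show ?thesis using pn by simp
  qed
  also have "(\<Sum>j\<le>n. of_nat (p choose (2*j)) * (5/4::rat)^j)
      = of_int (\<Sum>j\<le>n. int (p choose (2*j)) * 5^j * 2^(p - 2*j)) / (2 * 2^(p-1))"
  proof -
    have tp: "(2::rat) * 2^(p-1) = 2^p" using pn by simp
    have "\<And>j. j \<le> n \<Longrightarrow> of_nat (p choose (2*j)) * (5/4::rat)^j = of_nat (p choose (2*j)) * 5^j * 2^(p - 2*j) / 2^p"
    proof -
      fix j assume "j \<le> n"
      then have e: "p - 2*j + 2*j = p" using pn by simp
      have "(4::rat)^j = 2^(2*j)" by (simp add: power_mult)
      then have "(2::rat)^(p - 2*j) * 4^j = 2^p" using e by (metis power_add)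
      then show "of_nat (p choose (2*j)) * (5/4::rat)^j = of_nat (p choose (2*j)) * 5^j * 2^(p - 2*j) / 2^p"
        by (simp add: power_divide field_simps)
    qed
    then have "(\<Sum>j\<le>n. of_nat (p choose (2*j)) * (5/4::rat)^j) = (\<Sum>j\<le>n. of_nat (p choose (2*j)) * 5^j * 2^(p - 2*j) / 2^p)"
      by (rule sum.cong[OF refl]) simp
    then show ?thesis unfolding tp by (simp add: sum_divide_distrib)
  qed
  finally show ?thesis .
qed

theorem mainTheorem16:
  fixes p :: nat
  assumes "prime p" and "p > 5"
  shows "rat_cong_mod
    (\<Sum>k=1..(p - 1) div 2. of_nat ((2*k) choose k) / (of_nat k * (-16) ^ k))
    (- (15/2) * (of_nat (fib (nat (int p - Legendre (int p) 5)))) / of_nat p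
       + 4 * fermat_quot2 p)
    (int p)"
proof -
  note pp = assms(1) and p5 = assms(2)
  have oddp: "odd p" using prime_odd_nat[OF pp] p5 by simp
  then obtain n where pn: "p = Suc (2*n)" by (metis oddE Suc_eq_plus1)
  have nd: "(p - 1) div 2 = n" using pn by simp
  define e where "e = Legendre (int p) 5"
  have e1: "e = 1 \<or> e = -1" using legendre_facts(1)[OF pp p5] unfolding e_def .
  have e5: "[e = 5^n] (mod int p)" using legendre_facts(2)[OF pp p5] unfolding e_def nd .
  define w :: int where "w = 2^(p-1)"
  define a where "a = int (fib (2*n)) + int (fib (Suc p))"
  define b where "b = int (fib p)"
  define V where "V = (\<Sum>j\<le>n. int (p choose (2*j)) * 5^j * 2^(p - 2*j))"
  define F where "F = int (fib (nat (int p - e)))"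
  have bf1: "2*V = a^3 + 3*a" using binet_facts(1)[of n] unfolding V_def a_def pn .
  have bf2: "a^2 - 5*b^2 = -4" using binet_facts(2)[of n] unfolding a_def b_def pn .
  have bf3: "(\<Sum>j\<le>n. int (p choose (2*j)) * 5^j) = w * a" using binet_facts(3)[of n] unfolding w_def a_def pn .
  have bf4: "(\<Sum>j\<le>n. int (p choose (Suc (2*j))) * 5^j) = w * b" using binet_facts(4)[of n] unfolding w_def b_def pn .
  have hw: "[w = 1] (mod int p)"
  proof -
    have "\<not> p dvd 2" using p5 by (auto dest: dvd_imp_le)
    then have "[2^(p-1) = 1] (mod p)" by (rule fermat_theorem[OF pp])
    then have "[int (2^(p-1)) = int 1] (mod int p)" by (simp only: cong_int_iff)
    then show ?thesis unfolding w_def by simp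
  qed
  have hA: "[w*a = 1] (mod int p)" using sum_even_cong[OF pp pn] unfolding bf3 .
  have ha: "[a = 1] (mod int p)"
  proof -
    have "[w*a = 1*a] (mod int p)" by (rule cong_mult[OF hw cong_refl])
    then show ?thesis using hA by (metis cong_sym cong_trans mult_1)
  qed
  have hB: "[w*b = 5^n] (mod int p)" using sum_odd_cong[OF pp pn] unfolding bf4 .
  have hb0: "[b = e] (mod int p)"
  proof -
    have "[w*b = 1*b] (mod int p)" by (rule cong_mult[OF hw cong_refl])
    then have "[b = 5^n] (mod int p)" using hB by (metis cong_sym cong_trans mult_1)
    then show ?thesis using e5 by (metis cong_sym cong_trans)
  qed
  have he: "e^2 = 1" using e1 by auto
  have hb: "[e*b = 1] (mod int p)"
  proof -
    have "[e*b = e*e] (mod int p)" by (rule cong_mult[OF cong_refl hb0])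
    then show ?thesis using he by (simp add: power2_eq_square)
  qed
  have hF: "2*F = a - e*b"
    using e1
  proof
    assume "e = 1"
    then have "nat (int p - e) = 2*n" using pn by simp
    then show ?thesis unfolding F_def a_def b_def \<open>e = 1\<close> pn by simp
  next
    assume "e = -1"
    then have "nat (int p - e) = Suc p" using pn by simp
    then show ?thesis unfolding F_def a_def b_def \<open>e = -1\<close> pn by simp
  qed
  have "(int p)^2 dvd -2*V - 4*w^2 + 15*w*F + 8*w"
    by (rule final_int[OF pp oddp hw ha hb he bf2 bf1 hF])
  then obtain m where m: "-2*V - 4*w^2 + 15*w*F + 8*w = (int p)^2 * m" by (auto elim: dvdE)
  have c1: "cg p (\<Sum>k=1..n. of_nat ((2*k) choose k) / (of_nat k * (-16) ^ k))
              (\<Sum>k=1..n. of_nat (n choose k) * (1/4)^k / of_nat k)" by (rule stepA[OF pp p5 pn])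
  have eq2: "(\<Sum>k=1..n. of_nat (n choose k) * (1/4::rat)^k / of_nat k) = (\<Sum>j=1..n. ((5/4)^j - 1) / of_nat j)"
    using harm_id[of n "1/4::rat"] by simp
  have c3: "cg p (\<Sum>j=1..n. ((5/4)^j - 1) / (of_nat j :: rat))
              (\<Sum>j=1..n. - (2 / of_nat p) * of_nat (p choose (2*j)) * ((5/4)^j - 1))" by (rule stepC[OF pp p5 pn])
  have eq4: "(\<Sum>j=1..n. - (2 / of_nat p) * of_nat (p choose (2*j)) * ((5/4)^j - 1))
       = - (2 / of_nat p) * (of_int V / (2 * of_int w) - of_int w :: rat)"
    using stepD[OF pn] unfolding V_def w_def by simp
  have c5: "cg p (- (2 / of_nat p) * (of_int V / (2 * of_int w) - of_int w :: rat))
       (- (15/2) * (of_nat (fib (nat (int p - Legendre (int p) 5)))) / of_nat p + 4 * fermat_quot2 p)"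
  proof -
    have W0: "(of_int w :: rat) \<noteq> 0" unfolding w_def by simp
    have P0: "(of_nat p :: rat) \<noteq> 0" using pn by simp
    have hm: "-2 * of_int V - 4 * (of_int w)^2 + 15 * of_int w * of_int F + 8 * of_int w = (of_nat p :: rat)^2 * of_int m"
      using arg_cong[OF m, of "of_int :: int \<Rightarrow> rat"] by simp
    have fq: "fermat_quot2 p = (of_int w - 1) / of_nat p" unfolding fermat_quot2_def w_def by simp
    have fF: "(of_nat (fib (nat (int p - Legendre (int p) 5))) :: rat) = of_int F" unfolding F_def e_def by simp
    have eqd: "((- (2 / of_nat p) * (of_int V / (2 * of_int w) - of_int w :: rat))
       - (- (15/2) * (of_nat (fib (nat (int p - Legendre (int p) 5)))) / of_nat p + 4 * fermat_quot2 p)) / of_nat p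
       = of_int m / of_int (int 1 * 2^p)"
    proof -
      have "of_int (int 1 * 2^p) = (2 * of_int w :: rat)" unfolding w_def using pn by simp
      then show ?thesis unfolding fq fF using abs_E[OF hm W0 P0] by simp
    qed
    have cop: "coprime (int 1 * 2^p) (int p)" by (rule coprime_k16[OF pp p5]) (use p5 in auto)
    show ?thesis unfolding cg_def[OF pp] eqd by (rule pint_div[OF pp pint_int[OF pp] cop])
  qed
  have "cg p (\<Sum>k=1..n. of_nat ((2*k) choose k) / (of_nat k * (-16) ^ k))
       (- (15/2) * (of_nat (fib (nat (int p - Legendre (int p) 5)))) / of_nat p + 4 * fermat_quot2 p)"
    using cg_trans[OF pp c1[unfolded eq2] cg_trans[OF pp c3 c5[folded eq4]]] .
  then show ?thesis unfolding rat_cong_mod_iff[OF pp] cg_def[OF pp] nd .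
qed

end
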